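(* Let $M, K, P, N$ be positive integers with $K \le P$. Let $\mathbf{A} \in \mathbb{R}^{M \times N}$ be any matrix such that each column has at least one nonzero entry. Let $\mathbf{F} \in \mathbb{R}^{P \times N}$ be any matrix such that for every set $\chi \subseteq \{1,\ldots,P\}$ with $|\chi| = K$, the span of the rows of $\mathbf{F}$ indexed by $\chi$ contains the span of the $M$ rows of $\mathbf{A}$. Then the average sparsity $\bar{s}$ over the rows of $\mathbf{F}$ satisfies $$\bar{s} \ge \frac{N}{P}\,(P - K + 1).$$
   Context: The sparsity of a vector is its number of nonzero entries; $\bar{s} = \frac{1}{P}\sum_{i=1}^P \|\mathbf{f}_i\|_0$, where $\mathbf{f}_i^T$ is the $i$-th row of $\mathbf{F}$ and $\|\cdot\|_0$ counts nonzero entries. *)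

theory Defs
  imports "HOL-Analysis.Analysis"
begin

text \<open>Matrices of size m x n are represented as functions nat => nat => real,
  with entries only meaningful for indices i < m, j < n (0-based).\<close>
definition row_vec :: "nat \<Rightarrow> (nat \<Rightarrow> nat \<Rightarrow> real) \<Rightarrow> nat \<Rightarrow> (nat \<Rightarrow> real)" where
  "row_vec n X i = (\<lambda>j. if j < n then X i j else 0)"

definition row_span :: "nat \<Rightarrow> (nat \<Rightarrow> nat \<Rightarrow> real) \<Rightarrow> nat set \<Rightarrow> (nat \<Rightarrow> real) set" where
  "row_span n X I = {v. \<exists>c. v = (\<lambda>j. \<Sum>i\<in>I. c i * row_vec n X i j)}"

definition row_l0 :: "nat \<Rightarrow> (nat \<Rightarrow> nat \<Rightarrow> real) \<Rightarrow> nat \<Rightarrow> nat" where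
  "row_l0 n X i = card {j. j < n \<and> X i j \<noteq> 0}"

definition avg_sparsity :: "nat \<Rightarrow> nat \<Rightarrow> (nat \<Rightarrow> nat \<Rightarrow> real) \<Rightarrow> real" where
  "avg_sparsity P N F = (1 / real P) * (\<Sum>i<P. real (row_l0 N F i))"

end

theory Submission
  imports Defs
begin

theorem theorem2:
  fixes M K P N :: nat
    and A F :: "nat \<Rightarrow> nat \<Rightarrow> real"
  assumes "0 < M" and "0 < K" and "0 < P" and "0 < N"
    and "K \<le> P"
    and A_cols: "\<forall>j<N. \<exists>i<M. A i j \<noteq> 0"
    and F_span: "\<forall>S. S \<subseteq> {..<P} \<and> card S = K \<longrightarrow>
                   row_span N A {..<M} \<subseteq> row_span N F S"
  shows "avg_sparsity P N F \<ge> real N / real P * (real P - real K + 1)"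
proof -
  have col: "real P - real K + 1 \<le> (\<Sum>i<P. (if F i j \<noteq> 0 then 1 else 0::real))" if j: "j < N" for j
  proof -
    define Z where "Z = {i. i < P \<and> F i j = 0}"
    have Zs: "Z \<subseteq> {..<P}" unfolding Z_def by auto
    have cZ: "card Z < K"
    proof (rule ccontr)
      assume "\<not> card Z < K"
      then obtain S where S: "S \<subseteq> Z" "card S = K"
        using obtain_subset_with_card_n[of K Z] by auto
      obtain i0 where i0: "i0 < M" "A i0 j \<noteq> 0" using A_cols j by auto
      have eq: "row_vec N A i0 = (\<lambda>x. \<Sum>i<M. (if i = i0 then 1 else 0) * row_vec N A i x)"
      proof
        fix x
        have "(\<Sum>i<M. (if i = i0 then 1 else 0) * row_vec N A i x) = (\<Sum>i<M. (if i = i0 then row_vec N A i x else 0))"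
          by (rule sum.cong) auto
        also have "\<dots> = row_vec N A i0 x" using i0 by simp
        finally show "row_vec N A i0 x = (\<Sum>i<M. (if i = i0 then 1 else 0) * row_vec N A i x)" by simp
      qed
      have "row_vec N A i0 \<in> row_span N A {..<M}"
      proof -
        have "\<exists>c. row_vec N A i0 = (\<lambda>j. \<Sum>i<M. c i * row_vec N A i j)"
          using eq by (rule exI[of _ "\<lambda>i. if i = i0 then 1 else (0::real)"])
        thus ?thesis unfolding row_span_def by simp
      qed
      note rv = this
      have SP: "S \<subseteq> {..<P}" using S(1) Zs by (rule subset_trans)
      have sub: "row_span N A {..<M} \<subseteq> row_span N F S" using F_span SP S(2) by simp
      have "row_vec N A i0 \<in> row_span N F S" using sub rv by (rule subsetD)
      then obtain d where d: "row_vec N A i0 = (\<lambda>j. \<Sum>i\<in>S. d i * row_vec N F i j)"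
        unfolding row_span_def by auto
      have "A i0 j = row_vec N A i0 j" using j by (simp add: row_vec_def)
      also have "\<dots> = (\<Sum>i\<in>S. d i * row_vec N F i j)" using d by simp
      also have "\<dots> = 0" using S j by (intro sum.neutral) (auto simp: row_vec_def Z_def)
      finally show False using i0 by simp
    qed
    have "(\<Sum>i<P. (if F i j \<noteq> 0 then 1 else 0::real)) = real (card ({..<P} - Z))"
    proof -
      have "{..<P} - Z = {..<P} \<inter> {i. F i j \<noteq> 0}" unfolding Z_def by auto
      thus ?thesis by (simp add: sum.If_cases)
    qed
    also have "\<dots> = real P - real (card Z)"
    proof -
      have "card Z \<le> P" using card_mono[OF _ Zs] by simp
      thus ?thesis using Zs by (simp add: card_Diff_subset finite_subset of_nat_diff)
    qed
    finally show ?thesis using cZ by linarith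
  qed
  have "real N * (real P - real K + 1) = (\<Sum>j<N. (real P - real K + 1))" by simp
  also have "\<dots> \<le> (\<Sum>j<N. \<Sum>i<P. (if F i j \<noteq> 0 then 1 else 0::real))"
    by (rule sum_mono) (use col in auto)
  also have "\<dots> = (\<Sum>i<P. \<Sum>j<N. (if F i j \<noteq> 0 then 1 else 0::real))" by (rule sum.swap)
  also have "\<dots> = (\<Sum>i<P. real (row_l0 N F i))"
  proof (rule sum.cong[OF refl])
    fix i
    have "{j. j < N \<and> F i j \<noteq> 0} = {..<N} \<inter> {j. F i j \<noteq> 0}" by auto
    thus "(\<Sum>j<N. (if F i j \<noteq> 0 then 1 else 0::real)) = real (row_l0 N F i)"
      by (simp add: row_l0_def sum.If_cases)
  qed
  finally have "real N * (real P - real K + 1) \<le> (\<Sum>i<P. real (row_l0 N F i))" .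
  hence "real N * (real P - real K + 1) / real P \<le> (\<Sum>i<P. real (row_l0 N F i)) / real P"
    by (rule divide_right_mono) simp_all
  moreover have "real N / real P * (real P - real K + 1) = real N * (real P - real K + 1) / real P" by simp
  moreover have "1 / real P * (\<Sum>i<P. real (row_l0 N F i)) = (\<Sum>i<P. real (row_l0 N F i)) / real P" by simp
  ultimately show ?thesis unfolding avg_sparsity_def by linarith
qed

end
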